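(* Let $(K,\mathrm{val})$ be a valued field whose residue class field $F$ has characteristic two, and assume every strict unit admits a square root in $K$. Let $A$ be a subring with $B\subseteq A\subseteq K$. Then every $x\in K^\times\setminus B^\times$ can be written as $x=u^2+v^2$ with $u,v\in K$ and $\mathrm{val}(u)=\mathrm{val}(v)=\min\{e,\mathrm{val}(x)\}$. Moreover, if $x\in A$, then $u$ and $v$ can be chosen in $A$.
   Context: Let $(G,\le)$ be a totally ordered abelian group written multiplicatively with identity $e$. Let $(K,\mathrm{val})$ be a valued field with surjective valuation $\mathrm{val}:K\to G\cup\{\infty\}$, valuation ring $B=\{x:\mathrm{val}(x)\ge e\}$ (so $B^\times=\{x:\mathrm{val}(x)=e\}$), residue map $\pi:B\to F$, residue field $F$. A strict unit is $x\in B^\times$ with $\pi(x)=1$. *)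

theory Defs
  imports Main
begin

text \<open>Valued field: the value group G is written additively (identity 0),
  the valuation is val :: K => G on nonzero elements; val 0 = infinity is
  modelled by treating 0 separately.\<close>

definition valuation :: "('k::field \<Rightarrow> 'g::linordered_ab_group_add) \<Rightarrow> bool" where
  "valuation val \<longleftrightarrow>
     (\<forall>x y. x \<noteq> 0 \<and> y \<noteq> 0 \<longrightarrow> val (x * y) = val x + val y) \<and>
     (\<forall>x y. x \<noteq> 0 \<and> y \<noteq> 0 \<and> x + y \<noteq> 0 \<longrightarrow> min (val x) (val y) \<le> val (x + y)) \<and>
     (\<forall>g. \<exists>x. x \<noteq> 0 \<and> val x = g)"

definition val_ring :: "('k::field \<Rightarrow> 'g::linordered_ab_group_add) \<Rightarrow> 'k set" where
  "val_ring val = {x. x = 0 \<or> 0 \<le> val x}"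

definition val_units :: "('k::field \<Rightarrow> 'g::linordered_ab_group_add) \<Rightarrow> 'k set" where
  "val_units val = {x. x \<noteq> 0 \<and> val x = 0}"

definition val_maxideal :: "('k::field \<Rightarrow> 'g::linordered_ab_group_add) \<Rightarrow> 'k set" where
  "val_maxideal val = {x. x = 0 \<or> 0 < val x}"

definition residue_map ::
  "('k::field \<Rightarrow> 'g::linordered_ab_group_add) \<Rightarrow> ('k \<Rightarrow> 'f::field) \<Rightarrow> bool" where
  "residue_map val \<pi> \<longleftrightarrow>
     \<pi> 1 = 1 \<and>
     (\<forall>x\<in>val_ring val. \<forall>y\<in>val_ring val. \<pi> (x + y) = \<pi> x + \<pi> y \<and> \<pi> (x * y) = \<pi> x * \<pi> y) \<and>
     \<pi> ` val_ring val = UNIV \<and>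
     (\<forall>x\<in>val_ring val. \<pi> x = 0 \<longleftrightarrow> x \<in> val_maxideal val)"

definition strict_unit ::
  "('k::field \<Rightarrow> 'g::linordered_ab_group_add) \<Rightarrow> ('k \<Rightarrow> 'f::field) \<Rightarrow> 'k \<Rightarrow> bool" where
  "strict_unit val \<pi> x \<longleftrightarrow> x \<in> val_units val \<and> \<pi> x = 1"

definition is_subring :: "'k::field set \<Rightarrow> bool" where
  "is_subring A \<longleftrightarrow> 0 \<in> A \<and> 1 \<in> A \<and>
     (\<forall>x\<in>A. \<forall>y\<in>A. x + y \<in> A \<and> x * y \<in> A \<and> - x \<in> A)"

end

theory Submission
  imports Defs
begin

lemma dbl0: assumes h: "(a::'g::linordered_ab_group_add) + a = 0" shows "a = 0"
proof (rule ccontr)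
  assume "a \<noteq> 0"
  hence "a < 0 \<or> 0 < a" by auto
  thus False
  proof
    assume "a < 0" hence "a + a < 0" using add_neg_neg by blast
    thus False using h by simp
  next
    assume "0 < a" hence "0 < a + a" using add_pos_pos by blast
    thus False using h by simp
  qed
qed

lemma case1:
  fixes val :: "'k::field \<Rightarrow> 'g::linordered_ab_group_add"
    and \<pi> :: "'k \<Rightarrow> 'f::field"
  assumes V: "valuation val"
    and R: "residue_map val \<pi>"
    and C: "CHAR('f) = 2"
    and S: "\<forall>s. strict_unit val \<pi> s \<longrightarrow> (\<exists>r. r ^ 2 = s)"
    and x0: "x \<noteq> 0" and xp: "0 < val x"
  shows "\<exists>a b. x = a ^ 2 + b ^ 2 \<and> a \<noteq> 0 \<and> b \<noteq> 0 \<and> val a = 0 \<and> val b = 0"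
proof -
  have mul: "\<And>a b. a \<noteq> 0 \<Longrightarrow> b \<noteq> 0 \<Longrightarrow> val (a*b) = val a + val b"
    and ult: "\<And>a b. a \<noteq> 0 \<Longrightarrow> b \<noteq> 0 \<Longrightarrow> a + b \<noteq> 0 \<Longrightarrow> min (val a) (val b) \<le> val (a+b)"
    using V unfolding valuation_def by auto
  have v1: "val 1 = 0" using mul[of 1 1] by simp
  have vm1: "val (-1) = 0" using mul[of "-1" "-1"] v1 dbl0 by simp
  have sq: "val r = 0" if "r ^ 2 = s" "s \<noteq> 0" "val s = 0" for r s
  proof -
    have "r \<noteq> 0" using that by auto
    hence "val r + val r = 0" using mul[of r r] that by (simp add: power2_eq_square)
    thus ?thesis by (rule dbl0)
  qed
  have pi1: "\<pi> 1 = 1" and piadd: "\<And>a b. a \<in> val_ring val \<Longrightarrow> b \<in> val_ring val \<Longrightarrow> \<pi> (a+b) = \<pi> a + \<pi> b"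
    and pi0: "\<And>a. a \<in> val_ring val \<Longrightarrow> \<pi> a = 0 \<longleftrightarrow> a \<in> val_maxideal val"
    using R unfolding residue_map_def by auto
  have two: "(1::'f) + 1 = 0" using of_nat_CHAR[where 'a='f] C by simp
  have r1: "1 \<in> val_ring val" "-1 \<in> val_ring val" "x \<in> val_ring val"
    using v1 vm1 xp unfolding val_ring_def by auto
  have "\<pi> (1 + -1) = 0" using pi0[of 0] unfolding val_ring_def val_maxideal_def by simp
  hence "\<pi> (-1) = -1" using piadd[OF r1(1,2)] pi1 by (simp add: eq_neg_iff_add_eq_0 add.commute)
  hence pim1: "\<pi> (-1) = 1" using two by (metis add_eq_0_iff)
  have "strict_unit val \<pi> (-1)" using pim1 vm1 unfolding strict_unit_def val_units_def by simp
  then obtain i where i: "i ^ 2 = (-1::'k)" using S by blast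
  have vi: "val i = 0" using sq[OF i] vm1 by simp
  have x1: "1 + x \<noteq> 0"
  proof
    assume "1 + x = 0" hence "x = -1" by (simp add: add_eq_0_iff add.commute)
    thus False using vm1 xp by simp
  qed
  have vmx: "val (-x) = val x" using mul[of "-1" x] x0 vm1 by simp
  have "min (val (1+x)) (val (-x)) \<le> val ((1+x) + -x)" using ult[of "1+x" "-x"] x1 x0 by simp
  hence "val (1+x) \<le> 0" using v1 vmx xp by (auto simp: min_def split: if_splits)
  moreover have "min (val 1) (val x) \<le> val (1+x)" using ult[of 1 x] x1 x0 by simp
  moreover have "min (val 1) (val x) = 0" using v1 xp by (simp add: min_def less_imp_le)
  ultimately have v1x: "val (1+x) = 0" by (metis order.antisym)
  have "\<pi> x = 0" using pi0[OF r1(3)] xp unfolding val_maxideal_def by simp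
  hence "\<pi> (1+x) = 1" using piadd[OF r1(1,3)] pi1 by simp
  hence "strict_unit val \<pi> (1+x)" using v1x x1 unfolding strict_unit_def val_units_def by simp
  then obtain r where r: "r ^ 2 = 1 + x" using S by blast
  have vr: "val r = 0" using sq[OF r x1 v1x] .
  have "x = r^2 + i^2" using r i by simp
  moreover have "r \<noteq> 0" "i \<noteq> 0" using r i x1 by auto
  ultimately show ?thesis using vr vi by blast
qed

theorem mainTheorem18:
  fixes val :: "'k::field \<Rightarrow> 'g::linordered_ab_group_add"
    and \<pi> :: "'k \<Rightarrow> 'f::field"
    and A :: "'k set"
  assumes "valuation val"
    and "residue_map val \<pi>"
    and "CHAR('f) = 2"
    and "\<forall>s. strict_unit val \<pi> s \<longrightarrow> (\<exists>r. r ^ 2 = s)"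
    and "is_subring A"
    and "val_ring val \<subseteq> A"
  shows "\<forall>x. x \<noteq> 0 \<and> x \<notin> val_units val \<longrightarrow>
           (\<exists>u v. x = u ^ 2 + v ^ 2 \<and> u \<noteq> 0 \<and> v \<noteq> 0 \<and>
                  val u = min 0 (val x) \<and> val v = min 0 (val x) \<and>
                  (x \<in> A \<longrightarrow> u \<in> A \<and> v \<in> A))"
proof (intro allI impI)
  fix x assume hx: "x \<noteq> 0 \<and> x \<notin> val_units val"
  have x0: "x \<noteq> 0" and vx: "val x \<noteq> 0" using hx unfolding val_units_def by auto
  have mul: "\<And>a b. a \<noteq> 0 \<Longrightarrow> b \<noteq> 0 \<Longrightarrow> val (a*b) = val a + val b"
    using assms(1) unfolding valuation_def by auto
  have v1: "val 1 = 0" using mul[of 1 1] by simp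
  have inB: "\<And>a. val a = 0 \<Longrightarrow> a \<in> A" using assms(6) unfolding val_ring_def by auto
  show "\<exists>u v. x = u ^ 2 + v ^ 2 \<and> u \<noteq> 0 \<and> v \<noteq> 0 \<and>
                  val u = min 0 (val x) \<and> val v = min 0 (val x) \<and>
                  (x \<in> A \<longrightarrow> u \<in> A \<and> v \<in> A)"
  proof (cases "0 < val x")
    case True
    then obtain a b where ab: "x = a ^ 2 + b ^ 2" "a \<noteq> 0" "b \<noteq> 0" "val a = 0" "val b = 0"
      using case1[OF assms(1-4) x0] by blast
    thus ?thesis using True inB by (intro exI[of _ a] exI[of _ b]) auto
  next
    case False
    hence neg: "val x < 0" using vx by auto
    define w where "w = inverse x"
    have w0: "w \<noteq> 0" using x0 w_def by simp
    have "val x + val w = 0" using mul[OF x0 w0] x0 v1 w_def by simp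
    hence "val w = - val x" by (simp add: eq_neg_iff_add_eq_0 add.commute)
    hence "0 < val w" using neg by simp
    then obtain a b where ab: "w = a ^ 2 + b ^ 2" "a \<noteq> 0" "b \<noteq> 0" "val a = 0" "val b = 0"
      using case1[OF assms(1-4) w0] by blast
    have "(x*a)^2 + (x*b)^2 = x * (x * w)" using ab(1) by (simp add: power2_eq_square algebra_simps)
    also have "\<dots> = x" using x0 w_def by simp
    finally have e: "x = (x*a)^2 + (x*b)^2" by simp
    have "val (x*a) = val x" "val (x*b) = val x" using mul x0 ab by auto
    moreover have "x \<in> A \<Longrightarrow> x*a \<in> A \<and> x*b \<in> A" using assms(5) inB ab unfolding is_subring_def by auto
    ultimately show ?thesis using e x0 ab neg
      by (intro exI[of _ "x*a"] exI[of _ "x*b"]) (auto simp: min_def)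
  qed
qed

end
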